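(* Let $R$ be a System F type (possibly containing the type variable $X$ free) with $X\in^+R$, and let $\gamma$ be an environment defined on the free type variables of $D_{\mathrm{param}}$. Then $\mathit{rebuild}_{X,R}\ \llbracket D_{\mathrm{param}}\to D_{\mathrm{param}}\rrbracket_\gamma\ I$.
   Context: Terms are those of the pure untyped $\lambda$-calculus, up to $\alpha$-equivalence; $=_{\beta\eta}$ is $\beta\eta$-convertibility. System F types $T ::= X\mid T\to T'\mid\forall X.T$. A relation on terms is $\beta\eta$-closed if closed under replacing either related term by a $\beta\eta$-equal one; $\mathcal{R}$ is the set of such relations; environments $\gamma$ map finitely many type variables to $\mathcal{R}$. Interpretation: $\llbracket X\rrbracket_\gamma=\gamma(X)$; $t\,\llbracket T\to T'\rrbracket_\gamma\,t'$ iff for all $a,a'$ with $a\,\llbracket T\rrbracket_\gamma\,a'$, $t\,a\,\llbracket T'\rrbracket_\gamma\,t'\,a'$; $\llbracket \forall X.T\rrbracket_\gamma=\bigcap_{r\in\mathcal{R}}\llbracket T\rrbracket_{\gamma[X\mapsto r]}$. $X\in^pT$ (polarities $p\in\{+,-\}$, $\bar p$ the other): $X\in^+X$; $X\in^pY$ for variables $Y\ne X$; $X\in^p(T\to T')$ iff $X\in^{\bar p}T$ and $X\in^pT'$; $X\in^p\forall Y.T$ iff $X\in^pT$. Terms: $I:=\lambda x.x$, $K:=\lambda x.\lambda y.x$, $t\circ t':=\lambda x.t\,(t'\,x)$. $\mathit{fmap}_{X,R}$ is defined by recursion on $R$: $\mathit{fmap}_{X,X}=I$; $\mathit{fmap}_{X,Y}=K\,I$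 ($Y\ne X$); $\mathit{fmap}_{X,R\to R'}=\lambda f.\lambda a.\,\mathit{fmap}_{X,R'}\,f\circ a\circ\mathit{fmap}_{X,R}\,f$; $\mathit{fmap}_{X,\forall Y.R}=\lambda f.\,\mathit{fmap}_{X,R}\,f$ (bound variable chosen different from $X$). $\mathit{fold}:=\lambda a.\lambda x.x\,a$; $\mathit{in}_{X,R}:=\lambda x.\lambda a.\,a\,(\mathit{fmap}_{X,R}\,(\mathit{fold}\,a)\,x)$; $\mathit{rebuild}_{X,R}:=\mathit{fold}\ \mathit{in}_{X,R}$; $D_{\mathrm{param}}:=\forall X.(R\to X)\to X$. *)

theory Defs
  imports Main
begin

datatype dB = Var nat | App dB dB | Abs dB

primrec lift :: "dB \<Rightarrow> nat \<Rightarrow> dB" where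
  "lift (Var i) k = (if i < k then Var i else Var (Suc i))"
| "lift (App s t) k = App (lift s k) (lift t k)"
| "lift (Abs s) k = Abs (lift s (Suc k))"

primrec subst :: "dB \<Rightarrow> dB \<Rightarrow> nat \<Rightarrow> dB" where
  "subst (Var i) s k = (if k < i then Var (i - 1) else if i = k then s else Var i)"
| "subst (App t u) s k = App (subst t s k) (subst u s k)"
| "subst (Abs t) s k = Abs (subst t (lift s 0) (Suc k))"

inductive step :: "dB \<Rightarrow> dB \<Rightarrow> bool" where
  beta: "step (App (Abs s) t) (subst s t 0)"
| eta: "step (Abs (App (lift s 0) (Var 0))) s"
| appL: "step s s' \<Longrightarrow> step (App s t) (App s' t)"
| appR: "step t t' \<Longrightarrow> step (App s t) (App s t')"
| abs: "step s s' \<Longrightarrow> step (Abs s) (Abs s')"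

definition betaeta_eq :: "dB \<Rightarrow> dB \<Rightarrow> bool" where
  "betaeta_eq = equivclp step"

type_synonym rel = "dB \<Rightarrow> dB \<Rightarrow> bool"

definition betaeta_closed :: "rel \<Rightarrow> bool" where
  "betaeta_closed r \<longleftrightarrow>
     (\<forall>t t' s s'. r t t' \<and> betaeta_eq t s \<and> betaeta_eq t' s' \<longrightarrow> r s s')"

type_synonym tvar = nat

datatype ty = TVar tvar | Arr ty ty | All tvar ty

primrec ftv :: "ty \<Rightarrow> tvar set" where
  "ftv (TVar X) = {X}"
| "ftv (Arr T T') = ftv T \<union> ftv T'"
| "ftv (All Y T) = ftv T - {Y}"

type_synonym env = "tvar \<Rightarrow> rel option"

primrec interp :: "env \<Rightarrow> ty \<Rightarrow> rel" where
  "interp \<gamma> (TVar X) = (case \<gamma> X of Some r \<Rightarrow> r | None \<Rightarrow> (\<lambda>_ _. False))"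
| "interp \<gamma> (Arr T T') =
     (\<lambda>t t'. \<forall>a a'. interp \<gamma> T a a' \<longrightarrow> interp \<gamma> T' (App t a) (App t' a'))"
| "interp \<gamma> (All X T) =
     (\<lambda>t t'. \<forall>r. betaeta_closed r \<longrightarrow> interp (\<gamma>(X \<mapsto> r)) T t t')"

text \<open>Polarity: occ X True T means X \<in>+ T, occ X False T means X \<in>- T.\<close>
primrec occ :: "tvar \<Rightarrow> bool \<Rightarrow> ty \<Rightarrow> bool" where
  "occ X p (TVar Y) = (if Y = X then p else True)"
| "occ X p (Arr T T') = (occ X (\<not> p) T \<and> occ X p T')"
| "occ X p (All Y T) = occ X p T"

definition I :: dB where "I = Abs (Var 0)"
definition K :: dB where "K = Abs (Abs (Var 1))"
definition comp :: "dB \<Rightarrow> dB \<Rightarrow> dB" where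
  "comp t t' = Abs (App (lift t 0) (App (lift t' 0) (Var 0)))"

text \<open>fmap' (Some X) R is fmap_{X,R}; fmap' None R is the map where the (renamed) bound
  X no longer occurs, used when a binder \<forall>X shadows X (bound variable chosen \<noteq> X).\<close>
primrec fmap' :: "tvar option \<Rightarrow> ty \<Rightarrow> dB" where
  "fmap' x (TVar Y) = (if x = Some Y then I else App K I)"
| "fmap' x (Arr R R') =
     Abs (Abs (comp (App (fmap' x R') (Var 1)) (comp (Var 0) (App (fmap' x R) (Var 1)))))"
| "fmap' x (All Y R) = Abs (App (fmap' (if x = Some Y then None else x) R) (Var 0))"

definition fmap :: "tvar \<Rightarrow> ty \<Rightarrow> dB" where
  "fmap X R = fmap' (Some X) R"

definition fold :: dB where "fold = Abs (Abs (App (Var 0) (Var 1)))"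

definition inn :: "tvar \<Rightarrow> ty \<Rightarrow> dB" where
  "inn X R = Abs (Abs (App (Var 0) (App (App (fmap X R) (App fold (Var 0))) (Var 1))))"

definition rebuild :: "tvar \<Rightarrow> ty \<Rightarrow> dB" where
  "rebuild X R = App fold (inn X R)"

definition Dparam :: "tvar \<Rightarrow> ty \<Rightarrow> ty" where
  "Dparam X R = All X (Arr (Arr R (TVar X)) (TVar X))"

end

theory Submission imports Defs begin

abbreviation E where "E \<equiv> betaeta_eq"

lemma E_refl[simp]: "E x x" by (simp add: betaeta_eq_def)
lemma E_sym: "E x y \<Longrightarrow> E y x" by (simp add: betaeta_eq_def equivclp_sym)
lemma E_trans[trans]: "E x y \<Longrightarrow> E y z \<Longrightarrow> E x z" unfolding betaeta_eq_def by (rule equivclp_trans)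
lemma E_step: "step x y \<Longrightarrow> E x y" unfolding betaeta_eq_def by blast

lemma E_cong:
  assumes "\<And>x y. step x y \<Longrightarrow> step (f x) (f y)" "E a b"
  shows "E (f a) (f b)"
  using assms(2) unfolding betaeta_eq_def
proof (induction rule: equivclp_induct)
  case base then show ?case by simp
next
  case (step y z)
  then show ?case using assms(1) by (meson equivclp_into_equivclp)
qed

lemma E_appL: "E s s' \<Longrightarrow> E (App s t) (App s' t)"
  by (rule E_cong[where f="\<lambda>x. App x t"]) (auto intro: step.appL)
lemma E_appR: "E t t' \<Longrightarrow> E (App s t) (App s t')"
  by (rule E_cong[where f="\<lambda>x. App s x"]) (auto intro: step.appR)
lemma E_abs: "E s s' \<Longrightarrow> E (Abs s) (Abs s')"
  by (rule E_cong[where f="Abs"]) (auto intro: step.abs)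
lemma E_app: "E s s' \<Longrightarrow> E t t' \<Longrightarrow> E (App s t) (App s' t')"
  using E_appL E_appR E_trans by blast
lemma E_beta: "E (App (Abs s) t) (subst s t 0)" by (rule E_step) (rule step.beta)
lemma E_eta: "E (Abs (App (lift s 0) (Var 0))) s" by (rule E_step) (rule step.eta)

lemma lift_lift: "i < k + 1 \<Longrightarrow> lift (lift t i) (Suc k) = lift (lift t k) i"
  by (induct t arbitrary: i k) auto
lemma subst_lift[simp]: "subst (lift t k) s k = t"
  by (induct t arbitrary: k s) auto
lemma lift_subst_lt: "i < j + 1 \<Longrightarrow> lift (subst t s j) i = subst (lift t i) (lift s i) (j + 1)"
  by (induct t arbitrary: i j s) (auto simp: lift_lift)

primrec cl :: "nat \<Rightarrow> dB \<Rightarrow> bool" where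
  "cl k (Var i) = (i < k)" | "cl k (App s t) = (cl k s \<and> cl k t)" | "cl k (Abs s) = cl (Suc k) s"

lemma cl_lift: "cl k t \<Longrightarrow> k \<le> j \<Longrightarrow> lift t j = t"
  by (induct t arbitrary: k j) auto
lemma cl_subst: "cl k t \<Longrightarrow> k \<le> j \<Longrightarrow> subst t s j = t"
  by (induct t arbitrary: k j s) auto
lemma cl_mono: "cl k t \<Longrightarrow> k \<le> j \<Longrightarrow> cl j t"
  by (induct t arbitrary: k j) auto
lemma cl_lift2: "cl k t \<Longrightarrow> cl (Suc k) (lift t j)"
  by (induct t arbitrary: k j) auto

lemma lift_comp[simp]: "lift (comp t t') k = comp (lift t k) (lift t' k)"
  by (simp add: comp_def lift_lift)
lemma subst_comp[simp]: "subst (comp t t') s k = comp (subst t s k) (subst t' s k)"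
  by (simp add: comp_def lift_subst_lt)

lemma cl_comp: "cl k t \<Longrightarrow> cl k t' \<Longrightarrow> cl k (comp t t')"
  by (simp add: comp_def cl_lift2)

lemma cl_fmap: "cl 0 (fmap' x R)"
proof (induct R arbitrary: x)
  case (TVar Y) then show ?case by (simp add: I_def K_def)
next
  case (Arr R R')
  have a: "cl 2 (fmap' x R)" "cl 2 (fmap' x R')" using Arr cl_mono by blast+
  show ?case by (simp add: numeral_2_eq_2 cl_comp a[simplified numeral_2_eq_2])
next
  case (All Y R)
  then show ?case using cl_mono by fastforce
qed

lemma fmap_lift[simp]: "lift (fmap' x R) j = fmap' x R"
  using cl_fmap cl_lift by blast
lemma fmap_subst[simp]: "subst (fmap' x R) s j = fmap' x R"
  using cl_fmap cl_subst by blast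

lemma E_comp: "E (App (comp t t') c) (App t (App t' c))"
  unfolding comp_def using E_beta[of "App (lift t 0) (App (lift t' 0) (Var 0))" c] by simp

lemma E_fmap_arr: "E (App (App (fmap' x (Arr R R')) f) b) (comp (App (fmap' x R') f) (comp b (App (fmap' x R) f)))"
proof -
  have "E (App (fmap' x (Arr R R')) f) (Abs (comp (App (fmap' x R') (lift f 0)) (comp (Var 0) (App (fmap' x R) (lift f 0)))))"
    using E_beta[of "Abs (comp (App (fmap' x R') (Var 1)) (comp (Var 0) (App (fmap' x R) (Var 1))))" f]
    by simp
  then have "E (App (App (fmap' x (Arr R R')) f) b) (App (Abs (comp (App (fmap' x R') (lift f 0)) (comp (Var 0) (App (fmap' x R) (lift f 0))))) b)"
    by (rule E_appL)
  also have "E ... (comp (App (fmap' x R') f) (comp b (App (fmap' x R) f)))"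
    using E_beta[of "comp (App (fmap' x R') (lift f 0)) (comp (Var 0) (App (fmap' x R) (lift f 0)))" b] by simp
  finally show ?thesis .
qed

lemma E_I: "E (App I b) b"
  using E_beta[of "Var 0" b] by (simp add: I_def)

lemma E_KI: "E (App (App (App K I) f) b) b"
proof -
  have "E (App K I) (Abs I)" using E_beta[of "Abs (Var 1)" I] by (simp add: K_def I_def)
  then have "E (App (App (App K I) f) b) (App (App (Abs I) f) b)" by (intro E_appL)
  also have "E ... (App I b)" using E_beta[of I f] by (intro E_appL) (simp add: I_def)
  also have "E ... b" by (rule E_I)
  finally show ?thesis .
qed

lemma fmap_none: "E (App (App (fmap' None R) f) b) b"
proof (induct R arbitrary: f b)
  case (TVar Y) then show ?case using E_KI by simp
next
  case (Arr R R')
  let ?F = "fmap' None R" and ?F' = "fmap' None R'"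
  have "E (App (App (fmap' None (Arr R R')) f) b) (comp (App ?F' f) (comp b (App ?F f)))"
    by (rule E_fmap_arr)
  also have "comp (App ?F' f) (comp b (App ?F f)) =
     Abs (App (App ?F' (lift f 0)) (App (comp (lift b 0) (App ?F (lift f 0))) (Var 0)))"
    by (simp add: comp_def[of "App ?F' f"])
  also have "E ... (Abs (App (lift b 0) (Var 0)))"
  proof (rule E_abs)
    have "E (App (App ?F' (lift f 0)) (App (comp (lift b 0) (App ?F (lift f 0))) (Var 0)))
           (App (comp (lift b 0) (App ?F (lift f 0))) (Var 0))" by (rule Arr(2))
    also have "E ... (App (lift b 0) (App (App ?F (lift f 0)) (Var 0)))" by (rule E_comp)
    also have "E ... (App (lift b 0) (Var 0))" by (intro E_appR Arr(1))
    finally show "E (App (App ?F' (lift f 0)) (App (comp (lift b 0) (App ?F (lift f 0))) (Var 0)))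
           (App (lift b 0) (Var 0))" .
  qed
  also have "E ... b" by (rule E_eta)
  finally show ?case .
next
  case (All Y R)
  have "E (App (fmap' None (All Y R)) f) (App (fmap' None R) f)"
    using E_beta[of "App (fmap' None R) (Var 0)" f] by simp
  then have "E (App (App (fmap' None (All Y R)) f) b) (App (App (fmap' None R) f) b)" by (rule E_appL)
  also have "E ... b" by (rule All)
  finally show ?case .
qed

lemma closedD: "betaeta_closed r \<Longrightarrow> r t t' \<Longrightarrow> E t s \<Longrightarrow> E t' s' \<Longrightarrow> r s s'"
  unfolding betaeta_closed_def by blast

definition envcl :: "env \<Rightarrow> bool" where
  "envcl \<gamma> \<longleftrightarrow> (\<forall>Y r. \<gamma> Y = Some r \<longrightarrow> betaeta_closed r)"

lemma envcl_upd: "envcl \<gamma> \<Longrightarrow> betaeta_closed r \<Longrightarrow> envcl (\<gamma>(X \<mapsto> r))"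
  by (simp add: envcl_def)

lemma interp_closed: "envcl \<gamma> \<Longrightarrow> betaeta_closed (interp \<gamma> T)"
proof (induct T arbitrary: \<gamma>)
  case (TVar Y) then show ?case
  proof (cases "\<gamma> Y")
    case None then show ?thesis by (simp add: betaeta_closed_def)
  next
    case (Some a)
    then have "betaeta_closed a" using TVar unfolding envcl_def by blast
    then show ?thesis using Some by simp
  qed
next
  case (Arr T T')
  show ?case unfolding betaeta_closed_def interp.simps
  proof (intro allI impI)
    fix t t' s s' a a'
    assume h: "(\<forall>a a'. interp \<gamma> T a a' \<longrightarrow> interp \<gamma> T' (App t a) (App t' a')) \<and> E t s \<and> E t' s'"
      and "interp \<gamma> T a a'"
    then have "interp \<gamma> T' (App t a) (App t' a')" by blast
    moreover have "E (App t a) (App s a)" "E (App t' a') (App s' a')" using h E_appL by blast+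
    ultimately show "interp \<gamma> T' (App s a) (App s' a')"
      by (rule closedD[OF Arr(2)[OF Arr(3)]])
  qed
next
  case (All Y T)
  show ?case unfolding betaeta_closed_def
  proof (intro allI impI)
    fix t t' s s'
    assume h: "interp \<gamma> (All Y T) t t' \<and> E t s \<and> E t' s'"
    show "interp \<gamma> (All Y T) s s'" unfolding interp.simps
    proof (intro allI impI)
      fix q assume q: "betaeta_closed q"
      have "interp (\<gamma>(Y \<mapsto> q)) T t t'" using h q by simp
      then show "interp (\<gamma>(Y \<mapsto> q)) T s s'"
        using closedD[OF All(1)[OF envcl_upd[OF All(2) q]]] h by blast
    qed
  qed
qed

lemma E_fmap_all: "E (App (App (fmap' x (All Y R)) f) b) (App (App (fmap' (if x = Some Y then None else x) R) f) b)"
proof -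
  have "E (App (fmap' x (All Y R)) f) (App (fmap' (if x = Some Y then None else x) R) f)"
    using E_beta[of "App (fmap' (if x = Some Y then None else x) R) (Var 0)" f] by simp
  then show ?thesis by (rule E_appL)
qed

lemma E_fmap_arr_app: "E (App (App (App (fmap' x (Arr R R')) f) b) c) (App (App (fmap' x R') f) (App b (App (App (fmap' x R) f) c)))"
proof -
  have "E (App (App (App (fmap' x (Arr R R')) f) b) c) (App (comp (App (fmap' x R') f) (comp b (App (fmap' x R) f))) c)"
    by (intro E_appL E_fmap_arr)
  also have "E ... (App (App (fmap' x R') f) (App (comp b (App (fmap' x R) f)) c))" by (rule E_comp)
  also have "E ... (App (App (fmap' x R') f) (App b (App (App (fmap' x R) f) c)))" by (intro E_appR E_comp)
  finally show ?thesis .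
qed

lemma fmap_main:
  assumes "envcl \<gamma>" "betaeta_closed r" "betaeta_closed r'" and hf: "\<forall>u u'. r' u u' \<longrightarrow> r (App f u) u'"
  shows "(occ X True R \<longrightarrow> (\<forall>b b'. interp (\<gamma>(X\<mapsto>r')) R b b' \<longrightarrow> interp (\<gamma>(X\<mapsto>r)) R (App (App (fmap' (Some X) R) f) b) b'))
       \<and> (occ X False R \<longrightarrow> (\<forall>b b'. interp (\<gamma>(X\<mapsto>r)) R b b' \<longrightarrow> interp (\<gamma>(X\<mapsto>r')) R (App (App (fmap' (Some X) R) f) b) b'))"
  using assms(1)
proof (induct R arbitrary: \<gamma>)
  case (TVar Y)
  have clr: "betaeta_closed (interp (\<gamma>(X\<mapsto>r)) (TVar Y))" "betaeta_closed (interp (\<gamma>(X\<mapsto>r')) (TVar Y))"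
    using interp_closed envcl_upd TVar assms(2,3) by blast+
  show ?case
  proof (cases "Y = X")
    case True
    have "r (App (App (fmap' (Some X) (TVar Y)) f) b) b'" if "r' b b'" for b b'
    proof -
      have "E (App f b) (App (App (fmap' (Some X) (TVar Y)) f) b)"
        using E_sym[OF E_appL[OF E_I]] True by simp
      then show ?thesis using closedD[OF assms(2) hf[rule_format, OF that]] E_refl by blast
    qed
    then show ?thesis using True by simp
  next
    case False
    have "interp (\<gamma>(X\<mapsto>q)) (TVar Y) (App (App (fmap' (Some X) (TVar Y)) f) b) b'"
      if "interp (\<gamma>(X\<mapsto>q')) (TVar Y) b b'" "betaeta_closed (interp (\<gamma>(X\<mapsto>q)) (TVar Y))" for b b' q q'
    proof -
      have "E b (App (App (fmap' (Some X) (TVar Y)) f) b)" using E_sym[OF E_KI] False by simp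
      moreover have "interp (\<gamma>(X\<mapsto>q)) (TVar Y) b b'" using that(1) False by simp
      ultimately show ?thesis using closedD[OF that(2)] E_refl by blast
    qed
    then show ?thesis using clr by blast
  qed
next
  case (Arr R1 R2)
  note IH1 = Arr(1)[OF Arr(3)] and IH2 = Arr(2)[OF Arr(3)]
  have cl1: "betaeta_closed (interp (\<gamma>(X\<mapsto>r)) R2)" "betaeta_closed (interp (\<gamma>(X\<mapsto>r')) R2)"
    using interp_closed envcl_upd Arr(3) assms(2,3) by blast+
  show ?case
  proof (intro conjI impI allI)
    fix b b'
    assume o: "occ X True (Arr R1 R2)" and hb: "interp (\<gamma>(X\<mapsto>r')) (Arr R1 R2) b b'"
    from o have o1: "occ X False R1" "occ X True R2" by simp_all
    show "interp (\<gamma>(X\<mapsto>r)) (Arr R1 R2) (App (App (fmap' (Some X) (Arr R1 R2)) f) b) b'"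
      unfolding interp.simps
    proof (intro allI impI)
      fix c c' assume hc: "interp (\<gamma>(X\<mapsto>r)) R1 c c'"
      have "interp (\<gamma>(X\<mapsto>r')) R1 (App (App (fmap' (Some X) R1) f) c) c'" using IH1 o1(1) hc by blast
      then have "interp (\<gamma>(X\<mapsto>r')) R2 (App b (App (App (fmap' (Some X) R1) f) c)) (App b' c')" using hb by simp
      then have "interp (\<gamma>(X\<mapsto>r)) R2 (App (App (fmap' (Some X) R2) f) (App b (App (App (fmap' (Some X) R1) f) c))) (App b' c')"
        using IH2 o1(2) by blast
      then show "interp (\<gamma>(X\<mapsto>r)) R2 (App (App (App (fmap' (Some X) (Arr R1 R2)) f) b) c) (App b' c')"
        using closedD[OF cl1(1)] E_sym[OF E_fmap_arr_app] E_refl by blast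
    qed
  next
    fix b b'
    assume o: "occ X False (Arr R1 R2)" and hb: "interp (\<gamma>(X\<mapsto>r)) (Arr R1 R2) b b'"
    from o have o1: "occ X True R1" "occ X False R2" by simp_all
    show "interp (\<gamma>(X\<mapsto>r')) (Arr R1 R2) (App (App (fmap' (Some X) (Arr R1 R2)) f) b) b'"
      unfolding interp.simps
    proof (intro allI impI)
      fix c c' assume hc: "interp (\<gamma>(X\<mapsto>r')) R1 c c'"
      have "interp (\<gamma>(X\<mapsto>r)) R1 (App (App (fmap' (Some X) R1) f) c) c'" using IH1 o1(1) hc by blast
      then have "interp (\<gamma>(X\<mapsto>r)) R2 (App b (App (App (fmap' (Some X) R1) f) c)) (App b' c')" using hb by simp
      then have "interp (\<gamma>(X\<mapsto>r')) R2 (App (App (fmap' (Some X) R2) f) (App b (App (App (fmap' (Some X) R1) f) c))) (App b' c')"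
        using IH2 o1(2) by blast
      then show "interp (\<gamma>(X\<mapsto>r')) R2 (App (App (App (fmap' (Some X) (Arr R1 R2)) f) b) c) (App b' c')"
        using closedD[OF cl1(2)] E_sym[OF E_fmap_arr_app] E_refl by blast
    qed
  qed
next
  case (All Y R)
  show ?case
  proof (cases "Y = X")
    case True
    have "interp (\<gamma>(X\<mapsto>q)) (All Y R) (App (App (fmap' (Some X) (All Y R)) f) b) b'"
      if "interp (\<gamma>(X\<mapsto>q')) (All Y R) b b'" for b b' q q'
      unfolding interp.simps
    proof (intro allI impI)
      fix s assume s: "betaeta_closed s"
      have "interp (\<gamma>(X\<mapsto>s)) R b b'" using that s True by simp
      moreover have "E b (App (App (fmap' (Some X) (All Y R)) f) b)"
      proof -
        have "E (App (App (fmap' (Some X) (All Y R)) f) b) (App (App (fmap' None R) f) b)"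
          using E_fmap_all[of "Some X" Y R f b] True by simp
        then show ?thesis using E_sym E_trans fmap_none by blast
      qed
      moreover have "\<gamma>(X\<mapsto>q, Y\<mapsto>s) = \<gamma>(X\<mapsto>s)" using True by simp
      ultimately show "interp (\<gamma>(X\<mapsto>q, Y\<mapsto>s)) R (App (App (fmap' (Some X) (All Y R)) f) b) b'"
        using closedD[OF interp_closed[OF envcl_upd[OF All(2) s]]] E_refl by metis
    qed
    then show ?thesis by blast
  next
    case False
    show ?thesis
    proof (intro conjI impI allI)
      fix b b'
      assume o: "occ X True (All Y R)" and hb: "interp (\<gamma>(X\<mapsto>r')) (All Y R) b b'"
      show "interp (\<gamma>(X\<mapsto>r)) (All Y R) (App (App (fmap' (Some X) (All Y R)) f) b) b'"
        unfolding interp.simps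
      proof (intro allI impI)
        fix s assume s: "betaeta_closed s"
        have e1: "\<gamma>(X\<mapsto>r', Y\<mapsto>s) = \<gamma>(Y\<mapsto>s, X\<mapsto>r')" "\<gamma>(X\<mapsto>r, Y\<mapsto>s) = \<gamma>(Y\<mapsto>s, X\<mapsto>r)"
          using False by (auto simp: fun_upd_twist)
        have h0: "interp (\<gamma>(X\<mapsto>r', Y\<mapsto>s)) R b b'" using hb s by simp
        have "interp (\<gamma>(Y\<mapsto>s, X\<mapsto>r')) R b b'" using h0 unfolding e1 .
        then have "interp (\<gamma>(Y\<mapsto>s, X\<mapsto>r)) R (App (App (fmap' (Some X) R) f) b) b'"
          using All(1)[OF envcl_upd[OF All(2) s]] o by (simp only: occ.simps)
        moreover have "betaeta_closed (interp (\<gamma>(Y\<mapsto>s, X\<mapsto>r)) R)"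
          using interp_closed envcl_upd All(2) s assms(2) by blast
        moreover have "E (App (App (fmap' (Some X) R) f) b) (App (App (fmap' (Some X) (All Y R)) f) b)"
          using E_sym[OF E_fmap_all[of "Some X" Y R f b]] False by simp
        ultimately show "interp (\<gamma>(X\<mapsto>r, Y\<mapsto>s)) R (App (App (fmap' (Some X) (All Y R)) f) b) b'"
          unfolding e1 using closedD E_refl by blast
      qed
    next
      fix b b'
      assume o: "occ X False (All Y R)" and hb: "interp (\<gamma>(X\<mapsto>r)) (All Y R) b b'"
      show "interp (\<gamma>(X\<mapsto>r')) (All Y R) (App (App (fmap' (Some X) (All Y R)) f) b) b'"
        unfolding interp.simps
      proof (intro allI impI)
        fix s assume s: "betaeta_closed s"
        have e1: "\<gamma>(X\<mapsto>r', Y\<mapsto>s) = \<gamma>(Y\<mapsto>s, X\<mapsto>r')" "\<gamma>(X\<mapsto>r, Y\<mapsto>s) = \<gamma>(Y\<mapsto>s, X\<mapsto>r)"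
          using False by (auto simp: fun_upd_twist)
        have h0: "interp (\<gamma>(X\<mapsto>r, Y\<mapsto>s)) R b b'" using hb s by simp
        have "interp (\<gamma>(Y\<mapsto>s, X\<mapsto>r)) R b b'" using h0 unfolding e1 .
        then have "interp (\<gamma>(Y\<mapsto>s, X\<mapsto>r')) R (App (App (fmap' (Some X) R) f) b) b'"
          using All(1)[OF envcl_upd[OF All(2) s]] o by (simp only: occ.simps)
        moreover have "betaeta_closed (interp (\<gamma>(Y\<mapsto>s, X\<mapsto>r')) R)"
          using interp_closed envcl_upd All(2) s assms(3) by blast
        moreover have "E (App (App (fmap' (Some X) R) f) b) (App (App (fmap' (Some X) (All Y R)) f) b)"
          using E_sym[OF E_fmap_all[of "Some X" Y R f b]] False by simp
        ultimately show "interp (\<gamma>(X\<mapsto>r', Y\<mapsto>s)) R (App (App (fmap' (Some X) (All Y R)) f) b) b'"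
          unfolding e1 using closedD E_refl by blast
      qed
    qed
  qed
qed


lemma subst_fold[simp]: "subst fold s k = fold" by (simp add: fold_def)

lemma E_fold: "E (App (App fold a) u) (App u a)"
proof -
  have "E (App fold a) (Abs (App (Var 0) (lift a 0)))"
    using E_beta[of "Abs (App (Var 0) (Var 1))" a] by (simp add: fold_def)
  then have "E (App (App fold a) u) (App (Abs (App (Var 0) (lift a 0))) u)" by (rule E_appL)
  also have "E ... (App u a)" using E_beta[of "App (Var 0) (lift a 0)" u] by simp
  finally show ?thesis .
qed

lemma E_inn: "E (App (App (inn X R) b) a) (App a (App (App (fmap X R) (App fold a)) b))"
proof -
  have "E (App (inn X R) b) (Abs (App (Var 0) (App (App (fmap X R) (App fold (Var 0))) (lift b 0))))"
    using E_beta[of "Abs (App (Var 0) (App (App (fmap X R) (App fold (Var 0))) (Var 1)))" b]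
    by (simp add: inn_def fmap_def)
  then have "E (App (App (inn X R) b) a) (App (Abs (App (Var 0) (App (App (fmap X R) (App fold (Var 0))) (lift b 0)))) a)"
    by (rule E_appL)
  also have "E ... (App a (App (App (fmap X R) (App fold a)) b))"
    using E_beta[of "App (Var 0) (App (App (fmap X R) (App fold (Var 0))) (lift b 0))" a] by (simp add: fmap_def)
  finally show ?thesis .
qed

theorem mainTheorem10:
  fixes X :: tvar and R :: ty and \<gamma> :: env
  assumes "occ X True R"
    and "finite (dom \<gamma>)"
    and "\<forall>Y r. \<gamma> Y = Some r \<longrightarrow> betaeta_closed r"
    and "ftv (Dparam X R) \<subseteq> dom \<gamma>"
  shows "interp \<gamma> (Arr (Dparam X R) (Dparam X R)) (rebuild X R) I"
proof -
  have envcl: "envcl \<gamma>" using assms(3) unfolding envcl_def .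
  have "interp \<gamma> (Dparam X R) (App (rebuild X R) t) (App I t')"
    if ht: "interp \<gamma> (Dparam X R) t t'" for t t'
  proof -
    have key: "r (App (App (rebuild X R) t) a) (App (App I t') a')"
      if r: "betaeta_closed r" and ha: "interp (\<gamma>(X\<mapsto>r)) (Arr R (TVar X)) a a'" for r a a'
    proof -
      define r' where "r' = (\<lambda>u u'. r (App u a) u')"
      have r'cl: "betaeta_closed r'" unfolding betaeta_closed_def r'_def
        using closedD[OF r] E_appL by blast
      have hf: "\<forall>u u'. r' u u' \<longrightarrow> r (App (App fold a) u) u'"
        unfolding r'_def using closedD[OF r] E_sym[OF E_fold] E_refl by blast
      have fm: "\<forall>b b'. interp (\<gamma>(X\<mapsto>r')) R b b' \<longrightarrow> interp (\<gamma>(X\<mapsto>r)) R (App (App (fmap X R) (App fold a)) b) b'"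
        using fmap_main[OF envcl r r'cl hf, of X R] assms(1) unfolding fmap_def by blast
      have inn_rel: "interp (\<gamma>(X\<mapsto>r')) (Arr R (TVar X)) (inn X R) a'"
        unfolding interp.simps(2)
      proof (intro allI impI)
        fix b b' assume hb: "interp (\<gamma>(X\<mapsto>r')) R b b'"
        have "r (App a (App (App (fmap X R) (App fold a)) b)) (App a' b')"
          using ha fm hb by simp
        then have "r (App (App (inn X R) b) a) (App a' b')"
          using closedD[OF r] E_sym[OF E_inn] E_refl by blast
        then show "interp (\<gamma>(X\<mapsto>r')) (TVar X) (App (inn X R) b) (App a' b')"
          by (simp add: r'_def)
      qed
      have "interp (\<gamma>(X\<mapsto>r')) (Arr (Arr R (TVar X)) (TVar X)) t t'"
        using ht r'cl unfolding Dparam_def interp.simps(3) by blast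
      then have "r' (App t (inn X R)) (App t' a')" using inn_rel by simp
      then have h1: "r (App (App t (inn X R)) a) (App t' a')" by (simp add: r'_def)
      have e1: "E (App (App t (inn X R)) a) (App (App (rebuild X R) t) a)"
        unfolding rebuild_def by (intro E_appL E_sym[OF E_fold])
      have e2: "E (App t' a') (App (App I t') a')" by (intro E_appL E_sym[OF E_I])
      show ?thesis by (rule closedD[OF r h1 e1 e2])
    qed
    show ?thesis unfolding Dparam_def interp.simps(3)
    proof (intro allI impI)
      fix r assume r: "betaeta_closed r"
      show "interp (\<gamma>(X \<mapsto> r)) (Arr (Arr R (TVar X)) (TVar X)) (App (rebuild X R) t) (App I t')"
        using key[OF r] by simp
    qed
  qed
  then show ?thesis by simp
qed

end
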